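(* Let $a,b,c\ge 0$ be integers with $a+c\ge 1$, $b+c\ge 1$, and $a+b+c\le D$. Let $I_a,I_b,I_c\subseteq\{1,\dots,D\}$ be pairwise disjoint with $|I_a|=a$, $|I_b|=b$, $|I_c|=c$. Define $u,v\in\mathbb{R}^D$ by $u_i=\frac{1}{a+c}$ for $i\in I_a\cup I_c$ and $u_i=0$ otherwise, and $v_i=\frac{1}{b+c}$ for $i\in I_b\cup I_c$ and $v_i=0$ otherwise. Let $r_1,\dots,r_D$ be i.i.d. standard Cauchy random variables (density $\frac{1}{\pi(1+r^2)}$), and $x=\sum_i u_ir_i$, $y=\sum_i v_ir_i$. Then $$\Pr\big(\mathrm{sign}(x)\neq\mathrm{sign}(y)\big)=\frac{1}{2}-\frac{2}{\pi^2}E\left\{\tan^{-1}\!\left(\frac{c}{a}|R|\right)\tan^{-1}\!\left(\frac{c}{b}|R|\right)\right\},$$ where $R$ is a standard Cauchy random variable, with the convention that $\tan^{-1}\!\left(\frac{c}{0}|R|\right)=\frac{\pi}{2}$ when $c>0$ (note $R\neq0$ a.s.).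
   Context: $\tan^{-1}$ is the principal arctangent. In this setting $\rho_{\chi^2}=\sum_i\frac{2u_iv_i}{u_i+v_i}=\frac{2c}{a+b+2c}$. *)

theory Defs
  imports "HOL-Probability.Probability"
begin

definition cauchy_density :: "real \<Rightarrow> real" where
  "cauchy_density r = 1 / (pi * (1 + r\<^sup>2))"

definition cauchy_measure :: "real measure" where
  "cauchy_measure = density lborel (\<lambda>r. ennreal (cauchy_density r))"

text \<open>tan^{-1}((c/a) t), with the paper's convention that it equals pi/2 when a = 0
  (used only when c > 0).\<close>
definition atan_ratio :: "nat \<Rightarrow> nat \<Rightarrow> real \<Rightarrow> real" where
  "atan_ratio c a t = (if a = 0 then pi / 2 else arctan (real c / real a * t))"

end

theory Submission
  imports Defs "HOL-Real_Asymp.Real_Asymp"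
begin

lemma FTC_UNIV:
  fixes f F :: "real \<Rightarrow> real"
  assumes F: "\<And>x. DERIV F x :> f x" and f: "\<And>x. isCont f x" and nn: "\<And>x. 0 \<le> f x"
    and A: "(F \<longlongrightarrow> A) at_bot" and B: "(F \<longlongrightarrow> B) at_top"
  shows "integrable lborel f" "integral\<^sup>L lborel f = B - A"
    "(\<integral>\<^sup>+x. ennreal (f x) \<partial>lborel) = ennreal (B - A)"
proof -
  have i: "set_integrable lborel (einterval (-\<infinity>) \<infinity>) f"
   and e: "(LBINT x=-\<infinity>..\<infinity>. f x) = B - A"
    using interval_integral_FTC_nonneg[of "-\<infinity>" "\<infinity>" F f A B] F f nn A B
    by (auto simp: ereal_tendsto_simps1)
  show 1: "integrable lborel f" using i by (simp add: set_integrable_def)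
  show 2: "integral\<^sup>L lborel f = B - A" using e
    by (simp add: interval_lebesgue_integral_def set_lebesgue_integral_def)
  show "(\<integral>\<^sup>+x. ennreal (f x) \<partial>lborel) = ennreal (B - A)"
    using nn_integral_eq_integral[OF 1] nn 2 by simp
qed

definition cd :: "real \<Rightarrow> real \<Rightarrow> real" where
  "cd s x = s / (pi * (s\<^sup>2 + x\<^sup>2))"

lemma conv_deriv:
  fixes x s t u :: real assumes s: "s > 0" and t: "t > 0" and nz: "x^2 + (s-t)^2 > 0"
  defines "k \<equiv> 1 / ((x^2 + (s+t)^2) * (x^2 + (s-t)^2))"
  shows "((\<lambda>u. x*k * (ln (u^2+t^2) - ln ((u-x)^2+s^2)) + (x^2+s^2-t^2)*k/t * arctan (u/t)
            + (x^2-s^2+t^2)*k/s * arctan ((u-x)/s)) has_real_derivative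
          1 / ((u^2+t^2) * ((u-x)^2+s^2))) (at u)"
proof -
  have p1: "u^2+t^2 > 0" using t by (simp add: add_nonneg_pos)
  have p2: "(u-x)^2+s^2 > 0" using s by (simp add: add_nonneg_pos)
  have p3: "x^2 + (s+t)^2 > 0" using s t by (simp add: add_nonneg_pos)
  show ?thesis
    apply (rule DERIV_cong)
    apply (rule derivative_eq_intros refl | use s t p1 p2 in force)+
    using p1 p2 p3 nz s t unfolding k_def
    apply (simp add: divide_simps)
    apply (intro conjI impI)
     apply force
    apply (simp add: power2_eq_square)
    apply algebra
    done
qed

lemma conv_cd:
  fixes x s t :: real assumes s: "s > 0" and t: "t > 0" and nz: "x^2 + (s-t)^2 > 0"
  shows "(\<integral>\<^sup>+y. ennreal (cd s (x - y)) * ennreal (cd t y) \<partial>lborel) = ennreal (cd (s+t) x)"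
proof -
  define k where "k = 1 / ((x^2 + (s+t)^2) * (x^2 + (s-t)^2))"
  define F where "F = (\<lambda>u. x*k * (ln (u^2+t^2) - ln ((u-x)^2+s^2)) + (x^2+s^2-t^2)*k/t * arctan (u/t)
            + (x^2-s^2+t^2)*k/s * arctan ((u-x)/s))"
  define g where "g = (\<lambda>u::real. 1 / ((u^2+t^2) * ((u-x)^2+s^2)))"
  define L where "L = pi/2 * ((x^2+s^2-t^2)*k/t + (x^2-s^2+t^2)*k/s)"
  have pos: "u^2+t^2 > 0" "(u-x)^2+s^2 > 0" for u using s t by (simp_all add: add_nonneg_pos)
  have D: "DERIV F u :> g u" for u unfolding F_def g_def k_def by (rule conv_deriv[OF s t nz])
  have C: "isCont g u" for u unfolding g_def using pos by (intro continuous_intros) (metis mult_pos_pos less_irrefl)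
  have N: "0 \<le> g u" for u unfolding g_def using pos by (simp add: less_imp_le)
  have B: "(F \<longlongrightarrow> L) at_top" unfolding F_def L_def using s t apply real_asymp by (simp_all add: field_simps)
  have A: "(F \<longlongrightarrow> -L) at_bot" unfolding F_def L_def using s t apply real_asymp by (simp_all add: field_simps)
  have I: "(\<integral>\<^sup>+x. ennreal (g x) \<partial>lborel) = ennreal (L - -L)"
    by (rule FTC_UNIV(3)[OF D C N A B])
  have eq: "cd s (x - y) * cd t y = (s*t/pi^2) * g y" for y
    unfolding cd_def g_def by (simp add: power2_eq_square field_simps)
  have "(\<integral>\<^sup>+y. ennreal (cd s (x - y)) * ennreal (cd t y) \<partial>lborel)
     = (\<integral>\<^sup>+y. ennreal (s*t/pi^2) * ennreal (g y) \<partial>lborel)"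
  proof (intro nn_integral_cong)
    fix y
    have c0: "0 \<le> cd s (x - y)" "0 \<le> cd t y" using s t unfolding cd_def by (simp_all add: add_nonneg_nonneg)
    have "ennreal (cd s (x - y)) * ennreal (cd t y) = ennreal (cd s (x - y) * cd t y)"
      using c0 by (simp add: ennreal_mult)
    also have "\<dots> = ennreal (s*t/pi^2) * ennreal (g y)" unfolding eq using s t N
      by (intro ennreal_mult) auto
    finally show "ennreal (cd s (x - y)) * ennreal (cd t y) = ennreal (s*t/pi^2) * ennreal (g y)" .
  qed
  also have "\<dots> = ennreal (s*t/pi^2) * ennreal (2*L)"
  proof -
    have m: "(\<lambda>y. ennreal (g y)) \<in> borel_measurable lborel" unfolding g_def by measurable
    show ?thesis by (subst nn_integral_cmult[OF m]) (simp add: I)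
  qed
  also have "\<dots> = ennreal (cd (s+t) x)"
  proof -
    have "s*t/pi^2 * (2*L) = cd (s+t) x"
      using s t nz unfolding L_def k_def cd_def
      apply (simp add: divide_simps)
      apply (simp add: power2_eq_square)
      apply (intro conjI impI)
       apply force
      apply algebra
      done
    note e = this
    have c0: "0 \<le> cd (s+t) x" using s t unfolding cd_def by (simp add: add_nonneg_nonneg)
    have p: "0 < s*t/pi^2" using s t by simp
    have "0 \<le> 2*L" using e c0 p by (metis zero_le_mult_iff not_less)
    then show ?thesis using e p by (simp add: ennreal_mult[symmetric])
  qed
  finally show ?thesis .
qed

lemma cd_measurable[measurable]: "(\<lambda>x. cd s x) \<in> borel_measurable borel"
  unfolding cd_def by measurable

lemma cd_nonneg: "s \<ge> 0 \<Longrightarrow> 0 \<le> cd s x"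
  unfolding cd_def by (simp add: add_nonneg_nonneg)

lemma (in prob_space) indep_sums:
  fixes r :: "nat \<Rightarrow> 'a \<Rightarrow> real"
  assumes ind: "indep_vars (\<lambda>_. borel) r J" and AB: "A \<inter> B = {}" "A \<subseteq> J" "B \<subseteq> J"
  shows "indep_var borel (\<lambda>\<omega>. \<Sum>i\<in>A. r i \<omega>) borel (\<lambda>\<omega>. \<Sum>i\<in>B. r i \<omega>)"
proof -
  have "indep_var
    borel ((\<lambda>f. \<Sum>i\<in>A. f i) \<circ> (\<lambda>\<omega>. restrict (\<lambda>i. r i \<omega>) A))
    borel ((\<lambda>f. \<Sum>i\<in>B. f i) \<circ> (\<lambda>\<omega>. restrict (\<lambda>i. r i \<omega>) B))"
    using AB by (intro indep_var_compose[OF indep_var_restrict[OF ind]]) auto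
  also have "((\<lambda>f. \<Sum>i\<in>A. f i) \<circ> (\<lambda>\<omega>. restrict (\<lambda>i. r i \<omega>) A)) = (\<lambda>\<omega>. \<Sum>i\<in>A. r i \<omega>)"
    by (auto cong: rev_conj_cong)
  also have "((\<lambda>f. \<Sum>i\<in>B. f i) \<circ> (\<lambda>\<omega>. restrict (\<lambda>i. r i \<omega>) B)) = (\<lambda>\<omega>. \<Sum>i\<in>B. r i \<omega>)"
    by (auto cong: rev_conj_cong)
  finally show ?thesis .
qed

lemma (in prob_space) sum_cauchy:
  fixes r :: "nat \<Rightarrow> 'a \<Rightarrow> real"
  assumes ind: "indep_vars (\<lambda>_. borel) r J"
    and dist: "\<forall>i\<in>J. distributed M lborel (r i) (\<lambda>t. ennreal (cauchy_density t))"
    and I: "finite I" "I \<noteq> {}" "I \<subseteq> J"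
  shows "distributed M lborel (\<lambda>\<omega>. \<Sum>i\<in>I. r i \<omega>) (\<lambda>x. ennreal (cd (real (card I)) x))"
  using I
proof (induction I rule: finite_ne_induct)
  case (singleton i)
  have "cauchy_density = cd 1" by (auto simp: cauchy_density_def cd_def fun_eq_iff)
  then show ?case using dist singleton by simp
next
  case (insert i I)
  have IH: "distributed M lborel (\<lambda>\<omega>. \<Sum>i\<in>I. r i \<omega>) (\<lambda>x. ennreal (cd (real (card I)) x))"
    using insert by auto
  have di: "distributed M lborel (r i) (\<lambda>x. ennreal (cd 1 x))"
  proof -
    have "cauchy_density = cd 1" by (auto simp: cauchy_density_def cd_def fun_eq_iff)
    then show ?thesis using dist insert by simp
  qed
  have iv: "indep_var borel (\<lambda>\<omega>. \<Sum>i\<in>I. r i \<omega>) borel (\<lambda>\<omega>. \<Sum>i\<in>{i}. r i \<omega>)"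
    using insert by (intro indep_sums[OF ind]) auto
  have D: "distributed M lborel (\<lambda>\<omega>. (\<Sum>i\<in>I. r i \<omega>) + r i \<omega>)
     (\<lambda>x. \<integral>\<^sup>+y. ennreal (cd (real (card I)) (x - y)) * ennreal (cd 1 y) \<partial>lborel)"
    using distributed_convolution[OF _ IH di] iv by simp
  have cI: "card I \<ge> 1" using insert by (simp add: Suc_leI card_gt_0_iff)
  have AE: "AE x in lborel. (\<integral>\<^sup>+y. ennreal (cd (real (card I)) (x - y)) * ennreal (cd 1 y) \<partial>lborel)
      = ennreal (cd (real (card (insert i I))) x)"
    using AE_lborel_singleton[of 0]
  proof eventually_elim
    case (elim x)
    then have "x^2 + (real (card I) - 1)^2 > 0" by (simp add: add_pos_nonneg)
    then show ?case using conv_cd[of "real (card I)" 1 x] cI insert by (simp add: add.commute)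
  qed
  have "distributed M lborel (\<lambda>\<omega>. (\<Sum>i\<in>I. r i \<omega>) + r i \<omega>) (\<lambda>x. ennreal (cd (real (card (insert i I))) x))"
    using D by (subst (asm) distributed_cong_density[OF AE]) auto
  then show ?case using insert by (simp add: add.commute)
qed

lemma cd_deriv: "s > 0 \<Longrightarrow> DERIV (\<lambda>x. arctan (x/s) / pi) x :> cd s x"
  apply (rule DERIV_cong)
   apply (rule derivative_eq_intros refl | force)+
  apply (simp add: cd_def divide_simps power2_eq_square add_pos_pos)
  done

lemma cd_cont: "s > 0 \<Longrightarrow> isCont (cd s) x"
  unfolding cd_def by (intro continuous_intros) (simp add: add_pos_nonneg)

lemma cd_integral:
  assumes s: "s > 0"
  shows "integrable lborel (cd s)" "integral\<^sup>L lborel (cd s) = 1"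
proof -
  have A: "((\<lambda>x. arctan (x/s) / pi) \<longlongrightarrow> -1/2) at_bot" using s by real_asymp
  have B: "((\<lambda>x. arctan (x/s) / pi) \<longlongrightarrow> 1/2) at_top" using s by real_asymp
  note F = FTC_UNIV[OF cd_deriv[OF s] cd_cont[OF s] cd_nonneg[of s] A B]
  show "integrable lborel (cd s)" using F(1) s by (simp add: less_imp_le)
  show "integral\<^sup>L lborel (cd s) = 1" using F(2) s by (simp add: less_imp_le)
qed

lemma cd_half:
  assumes s: "s > 0"
  shows "integral\<^sup>L lborel (\<lambda>x. indicator {w<..} x * cd s x) = 1/2 - arctan (w/s) / pi"
proof -
  have B: "(((\<lambda>x. arctan (x/s) / pi) \<circ> real_of_ereal) \<longlongrightarrow> 1/2) (at_left \<infinity>)"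
    unfolding ereal_tendsto_simps1 using s by real_asymp
  have A: "(((\<lambda>x. arctan (x/s) / pi) \<circ> real_of_ereal) \<longlongrightarrow> arctan (w/s) / pi) (at_right (ereal w))"
    unfolding ereal_tendsto_simps1 using s by (intro tendsto_intros) auto
  have "(LBINT x=ereal w..\<infinity>. cd s x) = 1/2 - arctan (w/s) / pi"
    by (rule interval_integral_FTC_nonneg(2)[OF _ _ _ _ A B])
       (use s in \<open>auto intro!: cd_deriv cd_cont cd_nonneg AE_I2 simp: less_imp_le\<close>)
  then show ?thesis
    by (simp add: interval_lebesgue_integral_def set_lebesgue_integral_def)
qed

lemma sgn_expect:
  assumes s: "s > 0"
  shows "(\<integral>x. sgn (x + z) \<partial>density lborel (\<lambda>x. ennreal (cd s x))) = 2/pi * arctan (z/s)"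
proof -
  have "(\<integral>x. sgn (x + z) \<partial>density lborel (\<lambda>x. ennreal (cd s x))) = (\<integral>x. cd s x * sgn (x + z) \<partial>lborel)"
    using s by (subst integral_density) (auto simp: cd_nonneg)
  also have "\<dots> = (\<integral>x. 2 * (indicator {-z<..} x * cd s x) - cd s x \<partial>lborel)"
    using AE_lborel_singleton[of "-z"]
  proof (intro integral_cong_AE, measurable, eventually_elim)
    case (elim x)
    then show ?case by (cases "x + z > 0") (auto simp: indicator_def sgn_if)
  qed
  also have "\<dots> = 2 * (1/2 - arctan (-z/s) / pi) - 1"
  proof -
    have i1: "integrable lborel (\<lambda>x. indicator {-z<..} x * cd s x)"
      using integrable_mult_indicator[of "{-z<..}" lborel "cd s"] cd_integral[OF s] by simp
    show ?thesis
      using i1 cd_integral[OF s] cd_half[OF s, of "-z"] by simp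
  qed
  also have "\<dots> = 2/pi * arctan (z/s)" by (simp add: arctan_minus field_simps)
  finally show ?thesis .
qed

lemma cauchy_density_measurable[measurable]: "cauchy_density \<in> borel_measurable borel"
  unfolding cauchy_density_def by measurable

lemma subst_cd:
  fixes h :: "real \<Rightarrow> real" assumes c: "c > 0" and h[measurable]: "h \<in> borel_measurable borel"
  shows "(\<integral>z. h z \<partial>density lborel (\<lambda>x. ennreal (cd c x))) = (\<integral>R. h (c*R) \<partial>cauchy_measure)"
proof -
  have "(\<integral>z. h z \<partial>density lborel (\<lambda>x. ennreal (cd c x))) = (\<integral>z. cd c z * h z \<partial>lborel)"
    using c by (subst integral_density) (auto simp: cd_nonneg)
  also have "\<dots> = \<bar>c\<bar> *\<^sub>R (\<integral>x. cd c (0 + c*x) * h (0 + c*x) \<partial>lborel)"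
    using c by (intro lborel_integral_real_affine) simp
  also have "\<dots> = (\<integral>x. c * cd c (c*x) * h (c*x) \<partial>lborel)"
    using c by (simp add: mult.assoc)
  also have "\<dots> = (\<integral>x. cauchy_density x * h (c*x) \<partial>lborel)"
  proof (rule Bochner_Integration.integral_cong[OF refl])
    fix x :: real
    have xx: "1 + x * x \<noteq> 0" using zero_le_square[of x] by linarith
    have "c * cd c (c*x) = cauchy_density x"
      using c xx unfolding cd_def cauchy_density_def by (simp add: divide_simps power2_eq_square add_pos_pos add_pos_nonneg) (simp add: algebra_simps)
    then show "c * cd c (c*x) * h (c*x) = cauchy_density x * h (c*x)" by simp
  qed
  also have "\<dots> = (\<integral>R. h (c*R) \<partial>cauchy_measure)"
    unfolding cauchy_measure_def
    by (subst integral_density) (auto simp: cauchy_density_def add_nonneg_nonneg)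
  finally show ?thesis .
qed

lemma (in prob_space) AE_ne_distributed:
  assumes D: "distributed M lborel W f"
  shows "AE \<omega> in M. W \<omega> \<noteq> v"
proof -
  have fm: "f \<in> borel_measurable lborel" using distributed_borel_measurable[OF D] .
  have "AE x in density lborel f. x \<noteq> v"
    using AE_lborel_singleton[of v] fm by (subst AE_density) (auto elim: AE_mp)
  then have "AE x in distr M lborel W. x \<noteq> v" by (simp only: distributed_distr_eq_density[OF D])
  then show ?thesis using distributed_measurable[OF D] by (subst (asm) AE_distr_iff) auto
qed

lemma (in prob_space) sgn_exp_sum:
  fixes r :: "nat \<Rightarrow> 'a \<Rightarrow> real"
  assumes ind: "indep_vars (\<lambda>_. borel) r J"
    and dist: "\<forall>i\<in>J. distributed M lborel (r i) (\<lambda>t. ennreal (cauchy_density t))"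
    and S: "finite S" "S \<subseteq> J"
  shows "(\<integral>p. sgn (p + z) \<partial>distr M borel (\<lambda>\<omega>. \<Sum>i\<in>S. r i \<omega>))
     = (if card S = 0 then sgn z else 2/pi * arctan (z / real (card S)))"
proof (cases "S = {}")
  case True
  then show ?thesis by (simp add: integral_return)
next
  case False
  have D: "distributed M lborel (\<lambda>\<omega>. \<Sum>i\<in>S. r i \<omega>) (\<lambda>x. ennreal (cd (real (card S)) x))"
    by (rule sum_cauchy[OF ind dist S(1) False S(2)])
  have "distr M borel (\<lambda>\<omega>. \<Sum>i\<in>S. r i \<omega>) = distr M lborel (\<lambda>\<omega>. \<Sum>i\<in>S. r i \<omega>)"
    by (rule distr_cong) auto
  also have "\<dots> = density lborel (\<lambda>x. ennreal (cd (real (card S)) x))"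
    by (rule distributed_distr_eq_density[OF D])
  finally have e: "distr M borel (\<lambda>\<omega>. \<Sum>i\<in>S. r i \<omega>) = density lborel (\<lambda>x. ennreal (cd (real (card S)) x))" .
  have "card S > 0" using False S by (simp add: card_gt_0_iff)
  then show ?thesis unfolding e using sgn_expect[of "real (card S)" z] by simp
qed

lemma sum_if_const:
  fixes f :: "nat \<Rightarrow> real"
  assumes "finite A" "S \<subseteq> A"
  shows "(\<Sum>i\<in>A. (if i \<in> S then k else 0) * f i) = k * (\<Sum>i\<in>S. f i)"
proof -
  have "(\<Sum>i\<in>A. (if i \<in> S then k else 0) * f i) = (\<Sum>i\<in>A. if i \<in> S then k * f i else 0)"
    by (rule sum.cong) auto
  also have "\<dots> = (\<Sum>i\<in>A \<inter> S. k * f i)" using assms by (simp add: sum.inter_restrict)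
  also have "A \<inter> S = S" using assms by auto
  finally show ?thesis by (simp add: sum_distrib_left)
qed

lemma sgn_scale: "k > 0 \<Longrightarrow> sgn (k * (t::real)) = sgn t"
  by (simp add: sgn_mult)

lemma AE_cauchy_ne0: "AE R in cauchy_measure. R \<noteq> 0"
  unfolding cauchy_measure_def
  using AE_lborel_singleton[of 0] by (subst AE_density) (auto elim: AE_mp)

lemma factor_eq:
  fixes c a :: nat and R :: real
  assumes c: "c > 0" and R: "R \<noteq> 0"
  shows "(if a = 0 then sgn (real c * R) else 2/pi * arctan (real c * R / real a))
       = 2/pi * sgn R * atan_ratio c a \<bar>R\<bar>"
proof (cases "a = 0")
  case True
  then show ?thesis using c R by (simp add: atan_ratio_def sgn_mult)
next
  case False
  show ?thesis
  proof (cases "R > 0")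
    case True then show ?thesis using False by (simp add: atan_ratio_def)
  next
    case f: False
    then have "R < 0" using R by simp
    then show ?thesis using False by (simp add: atan_ratio_def arctan_minus)
  qed
qed

theorem theorem2:
  fixes M :: "'w measure" and D a b c :: nat
    and Ia Ib Ic :: "nat set" and r :: "nat \<Rightarrow> 'w \<Rightarrow> real"
  assumes "prob_space M"
    and "a + c \<ge> 1" and "b + c \<ge> 1" and "a + b + c \<le> D"
    and "Ia \<subseteq> {1..D}" and "Ib \<subseteq> {1..D}" and "Ic \<subseteq> {1..D}"
    and "Ia \<inter> Ib = {}" and "Ia \<inter> Ic = {}" and "Ib \<inter> Ic = {}"
    and "card Ia = a" and "card Ib = b" and "card Ic = c"
    and "prob_space.indep_vars M (\<lambda>_. borel) r {1..D}"
    and "\<forall>i\<in>{1..D}. distributed M lborel (r i) (\<lambda>t. ennreal (cauchy_density t))"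
  shows "let u = (\<lambda>i. if i \<in> Ia \<union> Ic then 1 / real (a + c) else 0);
             v = (\<lambda>i. if i \<in> Ib \<union> Ic then 1 / real (b + c) else 0);
             x = (\<lambda>\<omega>. \<Sum>i\<in>{1..D}. u i * r i \<omega>);
             y = (\<lambda>\<omega>. \<Sum>i\<in>{1..D}. v i * r i \<omega>)
         in measure M {\<omega> \<in> space M. sgn (x \<omega>) \<noteq> sgn (y \<omega>)}
            = 1 / 2 - 2 / pi\<^sup>2 *
              (\<integral>R. atan_ratio c a \<bar>R\<bar> * atan_ratio c b \<bar>R\<bar> \<partial>cauchy_measure)"
proof -
  interpret prob_space M by fact
  note ind = assms(14) and dist = assms(15)
  have finD: "finite {1..D}" by simp
  have fa: "finite Ia" and fb: "finite Ib" and fc: "finite Ic"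
    using assms(5-7) finite_subset finD by blast+
  define X where "X = (\<lambda>\<omega>. \<Sum>i\<in>Ia. r i \<omega>)"
  define Y where "Y = (\<lambda>\<omega>. \<Sum>i\<in>Ib. r i \<omega>)"
  define Z where "Z = (\<lambda>\<omega>. \<Sum>i\<in>Ic. r i \<omega>)"
  have rv: "r i \<in> borel_measurable M" if "i \<in> {1..D}" for i
    using ind that unfolding indep_vars_def by auto
  have rvS: "(\<lambda>\<omega>. \<Sum>i\<in>S. r i \<omega>) \<in> borel_measurable M" if "S \<subseteq> {1..D}" for S
    using that rv by (intro borel_measurable_sum) auto
  have Xm[measurable]: "X \<in> borel_measurable M" unfolding X_def using assms(5) by (rule rvS)
  have Ym[measurable]: "Y \<in> borel_measurable M" unfolding Y_def using assms(6) by (rule rvS)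
  have Zm[measurable]: "Z \<in> borel_measurable M" unfolding Z_def using assms(7) by (rule rvS)
  have acpos: "real (a + c) > 0" and bcpos: "real (b + c) > 0" using assms(2,3) by auto
  have xeq: "(\<Sum>i\<in>{1..D}. (if i \<in> Ia \<union> Ic then 1 / real (a + c) else 0) * r i \<omega>)
      = 1 / real (a + c) * (X \<omega> + Z \<omega>)" for \<omega>
    using assms(5,7,9) fa fc
    by (subst sum_if_const) (auto simp: X_def Z_def sum.union_disjoint)
  have yeq: "(\<Sum>i\<in>{1..D}. (if i \<in> Ib \<union> Ic then 1 / real (b + c) else 0) * r i \<omega>)
      = 1 / real (b + c) * (Y \<omega> + Z \<omega>)" for \<omega>
    using assms(6,7,10) fb fc
    by (subst sum_if_const) (auto simp: Y_def Z_def sum.union_disjoint)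
  define E where "E = {\<omega> \<in> space M. sgn (X \<omega> + Z \<omega>) \<noteq> sgn (Y \<omega> + Z \<omega>)}"
  have LHS: "{\<omega> \<in> space M. sgn (\<Sum>i\<in>{1..D}. (if i \<in> Ia \<union> Ic then 1 / real (a + c) else 0) * r i \<omega>)
       \<noteq> sgn (\<Sum>i\<in>{1..D}. (if i \<in> Ib \<union> Ic then 1 / real (b + c) else 0) * r i \<omega>)} = E"
    unfolding xeq yeq E_def using acpos bcpos by (simp add: sgn_scale)
  have AEx: "AE \<omega> in M. X \<omega> + Z \<omega> \<noteq> 0"
  proof -
    have "card (Ia \<union> Ic) = a + c" using assms(9,11,13) fa fc by (simp add: card_Un_disjoint)
    then have ne: "Ia \<union> Ic \<noteq> {}" using assms(2) by auto
    have "distributed M lborel (\<lambda>\<omega>. \<Sum>i\<in>Ia \<union> Ic. r i \<omega>) (\<lambda>x. ennreal (cd (real (card (Ia \<union> Ic))) x))"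
      using assms(5,7) fa fc ne by (intro sum_cauchy[OF ind dist]) auto
    from AE_ne_distributed[OF this, of 0] show ?thesis
      using assms(9) fa fc by (simp add: X_def Z_def sum.union_disjoint)
  qed
  have AEy: "AE \<omega> in M. Y \<omega> + Z \<omega> \<noteq> 0"
  proof -
    have "card (Ib \<union> Ic) = b + c" using assms(10,12,13) fb fc by (simp add: card_Un_disjoint)
    then have ne: "Ib \<union> Ic \<noteq> {}" using assms(3) by auto
    have "distributed M lborel (\<lambda>\<omega>. \<Sum>i\<in>Ib \<union> Ic. r i \<omega>) (\<lambda>x. ennreal (cd (real (card (Ib \<union> Ic))) x))"
      using assms(6,7) fb fc ne by (intro sum_cauchy[OF ind dist]) auto
    from AE_ne_distributed[OF this, of 0] show ?thesis
      using assms(10) fb fc by (simp add: Y_def Z_def sum.union_disjoint)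
  qed
  define SS where "SS = (\<lambda>\<omega>. sgn (X \<omega> + Z \<omega>) * sgn (Y \<omega> + Z \<omega>))"
  have SSm[measurable]: "SS \<in> borel_measurable M" unfolding SS_def by measurable
  have SSi: "integrable M SS"
    by (rule integrable_const_bound[where B=1]) (auto simp: SS_def sgn_if)
  have Em[measurable]: "E \<in> sets M" unfolding E_def by measurable
  have step1: "measure M E = 1/2 - 1/2 * (\<integral>\<omega>. SS \<omega> \<partial>M)"
  proof -
    have "measure M E = (\<integral>\<omega>. indicator E \<omega> \<partial>M)" using Em by (simp add: Int_absorb2 sets.sets_into_space)
    also have "\<dots> = (\<integral>\<omega>. 1/2 - 1/2 * SS \<omega> \<partial>M)"
      using AEx AEy AE_space[of M]
    proof (intro integral_cong_AE, measurable, eventually_elim)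
      case (elim \<omega>)
      then show ?case
        by (cases "X \<omega> + Z \<omega> > 0"; cases "Y \<omega> + Z \<omega> > 0")
           (auto simp: SS_def E_def indicator_def sgn_if)
    qed
    also have "\<dots> = 1/2 - 1/2 * (\<integral>\<omega>. SS \<omega> \<partial>M)"
      using SSi by (simp add: prob_space)
    finally show ?thesis .
  qed
  have iXY: "indep_var borel X borel Y" unfolding X_def Y_def by (rule indep_sums[OF ind assms(8,5,6)])
  define Z2 where "Z2 = (\<lambda>\<omega>. (Z \<omega>, Z \<omega>))"
  have Z2m[measurable]: "Z2 \<in> measurable M (borel \<Otimes>\<^sub>M borel)" unfolding Z2_def by measurable
  have sm: "(\<lambda>f. \<Sum>i\<in>S. f i) \<in> borel_measurable (Pi\<^sub>M T (\<lambda>_. borel::real measure))" if "S \<subseteq> T" for S T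
  proof -
    have "(\<lambda>f. \<Sum>i\<in>S. (\<lambda>i f. f i) i f) \<in> borel_measurable (Pi\<^sub>M T (\<lambda>_. borel::real measure))"
      using that by (intro borel_measurable_sum measurable_component_singleton) auto
    then show ?thesis by simp
  qed
  have iZXY: "indep_var (borel \<Otimes>\<^sub>M borel) Z2 (borel \<Otimes>\<^sub>M borel) (\<lambda>\<omega>. (X \<omega>, Y \<omega>))"
  proof -
    have "indep_var (borel \<Otimes>\<^sub>M borel) ((\<lambda>f. (\<Sum>i\<in>Ic. f i, \<Sum>i\<in>Ic. f i)) \<circ> (\<lambda>\<omega>. restrict (\<lambda>i. r i \<omega>) Ic))
        (borel \<Otimes>\<^sub>M borel) ((\<lambda>f. (\<Sum>i\<in>Ia. f i, \<Sum>i\<in>Ib. f i)) \<circ> (\<lambda>\<omega>. restrict (\<lambda>i. r i \<omega>) (Ia \<union> Ib)))"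
    proof (rule indep_var_compose[OF indep_var_restrict[OF ind]])
      show "Ic \<inter> (Ia \<union> Ib) = {}" using assms(9,10) by auto
      show "Ic \<subseteq> {1..D}" "Ia \<union> Ib \<subseteq> {1..D}" using assms(5-7) by auto
      show "(\<lambda>f::nat\<Rightarrow>real. (\<Sum>i\<in>Ic. f i, \<Sum>i\<in>Ic. f i)) \<in> measurable (Pi\<^sub>M Ic (\<lambda>_. borel)) (borel \<Otimes>\<^sub>M borel)"
        by (rule measurable_Pair[OF sm sm]) auto
      show "(\<lambda>f::nat\<Rightarrow>real. (\<Sum>i\<in>Ia. f i, \<Sum>i\<in>Ib. f i)) \<in> measurable (Pi\<^sub>M (Ia \<union> Ib) (\<lambda>_. borel)) (borel \<Otimes>\<^sub>M borel)"
        by (rule measurable_Pair[OF sm sm]) auto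
    qed
    also have "((\<lambda>f. (\<Sum>i\<in>Ic. f i, \<Sum>i\<in>Ic. f i)) \<circ> (\<lambda>\<omega>. restrict (\<lambda>i. r i \<omega>) Ic)) = Z2"
      by (auto simp: Z2_def Z_def fun_eq_iff intro!: sum.cong)
    also have "((\<lambda>f. (\<Sum>i\<in>Ia. f i, \<Sum>i\<in>Ib. f i)) \<circ> (\<lambda>\<omega>. restrict (\<lambda>i. r i \<omega>) (Ia \<union> Ib)))
        = (\<lambda>\<omega>. (X \<omega>, Y \<omega>))"
      by (auto simp: X_def Y_def fun_eq_iff intro!: sum.cong)
    finally show ?thesis .
  qed
  define PX where "PX = distr M borel X"
  define PY where "PY = distr M borel Y"
  define PZ where "PZ = distr M borel Z"
  define PZ2 where "PZ2 = distr M (borel \<Otimes>\<^sub>M borel) Z2"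
  have J: "distr M ((borel \<Otimes>\<^sub>M borel) \<Otimes>\<^sub>M (borel \<Otimes>\<^sub>M borel)) (\<lambda>\<omega>. (Z2 \<omega>, (X \<omega>, Y \<omega>))) = PZ2 \<Otimes>\<^sub>M (PX \<Otimes>\<^sub>M PY)"
  proof -
    have 1: "PX \<Otimes>\<^sub>M PY = distr M (borel \<Otimes>\<^sub>M borel) (\<lambda>\<omega>. (X \<omega>, Y \<omega>))"
      using iXY unfolding indep_var_distribution_eq PX_def PY_def by simp
    have 2: "PZ2 \<Otimes>\<^sub>M distr M (borel \<Otimes>\<^sub>M borel) (\<lambda>\<omega>. (X \<omega>, Y \<omega>))
       = distr M ((borel \<Otimes>\<^sub>M borel) \<Otimes>\<^sub>M (borel \<Otimes>\<^sub>M borel)) (\<lambda>\<omega>. (Z2 \<omega>, (X \<omega>, Y \<omega>)))"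
      using iZXY unfolding indep_var_distribution_eq PZ2_def by simp
    show ?thesis using 1 2 by simp
  qed
  interpret pX: prob_space PX unfolding PX_def by (rule prob_space_distr) simp
  interpret pY: prob_space PY unfolding PY_def by (rule prob_space_distr) simp
  interpret pZ2: prob_space PZ2 unfolding PZ2_def by (rule prob_space_distr) simp
  interpret pXY: pair_prob_space PX PY ..
  interpret pZXY: pair_prob_space PZ2 "PX \<Otimes>\<^sub>M PY" ..
  have sXY: "sets (PX \<Otimes>\<^sub>M PY) = sets (borel \<Otimes>\<^sub>M borel)"
    by (intro sets_pair_measure_cong) (simp_all add: PX_def PY_def)
  have sZXY: "sets (PZ2 \<Otimes>\<^sub>M (PX \<Otimes>\<^sub>M PY)) = sets ((borel \<Otimes>\<^sub>M borel) \<Otimes>\<^sub>M (borel \<Otimes>\<^sub>M borel))"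
    by (intro sets_pair_measure_cong sXY) (simp_all add: PZ2_def)
  define g where "g = (\<lambda>w::(real\<times>real)\<times>real\<times>real. sgn (fst (snd w) + fst (fst w)) * sgn (snd (snd w) + fst (fst w)))"
  have gm: "g \<in> borel_measurable (PZ2 \<Otimes>\<^sub>M (PX \<Otimes>\<^sub>M PY))"
    unfolding measurable_cong_sets[OF sZXY refl] g_def by measurable
  have gi: "integrable (PZ2 \<Otimes>\<^sub>M (PX \<Otimes>\<^sub>M PY)) g"
    by (rule pZXY.integrable_const_bound[where B=1, OF _ gm]) (auto simp: g_def sgn_if)
  have step2: "(\<integral>\<omega>. SS \<omega> \<partial>M) = (\<integral>w. g w \<partial>(PZ2 \<Otimes>\<^sub>M (PX \<Otimes>\<^sub>M PY)))"
    unfolding J[symmetric] by (subst integral_distr) (auto simp: g_def SS_def Z2_def)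
  also have "\<dots> = (\<integral>z. (\<integral>w. g (z, w) \<partial>(PX \<Otimes>\<^sub>M PY)) \<partial>PZ2)"
    by (rule pZXY.integral_fst'[OF gi, symmetric])
  finally have step3: "(\<integral>\<omega>. SS \<omega> \<partial>M) = (\<integral>z. (\<integral>w. g (z, w) \<partial>(PX \<Otimes>\<^sub>M PY)) \<partial>PZ2)" .
  define fX where "fX = (\<lambda>z::real. if a = 0 then sgn z else 2/pi * arctan (z / real a))"
  define fY where "fY = (\<lambda>z::real. if b = 0 then sgn z else 2/pi * arctan (z / real b))"
  have fXm[measurable]: "fX \<in> borel_measurable borel" unfolding fX_def by measurable
  have fYm[measurable]: "fY \<in> borel_measurable borel" unfolding fY_def by measurable
  have eX: "(\<integral>p. sgn (p + z) \<partial>PX) = fX z" for z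
    unfolding PX_def X_def fX_def using sgn_exp_sum[OF ind dist fa assms(5)] assms(11) by simp
  have eY: "(\<integral>p. sgn (p + z) \<partial>PY) = fY z" for z
    unfolding PY_def Y_def fY_def using sgn_exp_sum[OF ind dist fb assms(6)] assms(12) by simp
  have inner: "(\<integral>w. g (z, w) \<partial>(PX \<Otimes>\<^sub>M PY)) = fX (fst z) * fY (fst z)" for z
  proof -
    have gzm: "(\<lambda>w. g (z, w)) \<in> borel_measurable (PX \<Otimes>\<^sub>M PY)"
      unfolding measurable_cong_sets[OF sXY refl] g_def fst_conv snd_conv by measurable
    have gzi: "integrable (PX \<Otimes>\<^sub>M PY) (\<lambda>w. g (z, w))"
      by (rule pXY.integrable_const_bound[where B=1, OF _ gzm]) (auto simp: g_def sgn_if)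
    have "(\<integral>w. g (z, w) \<partial>(PX \<Otimes>\<^sub>M PY)) = (\<integral>p. (\<integral>q. g (z, (p, q)) \<partial>PY) \<partial>PX)"
      using pXY.integral_fst'[OF gzi] by simp
    also have "\<dots> = (\<integral>p. sgn (p + fst z) * (\<integral>q. sgn (q + fst z) \<partial>PY) \<partial>PX)"
      by (simp add: g_def)
    also have "\<dots> = fX (fst z) * fY (fst z)" by (simp add: eX eY)
    finally show ?thesis .
  qed
  have step4: "(\<integral>\<omega>. SS \<omega> \<partial>M) = (\<integral>z. fX z * fY z \<partial>PZ)"
  proof -
    have "(\<integral>\<omega>. SS \<omega> \<partial>M) = (\<integral>z. fX (fst z) * fY (fst z) \<partial>PZ2)"
      unfolding step3 inner ..
    also have "\<dots> = (\<integral>\<omega>. fX (Z \<omega>) * fY (Z \<omega>) \<partial>M)"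
      unfolding PZ2_def by (subst integral_distr) (auto simp: Z2_def)
    also have "\<dots> = (\<integral>z. fX z * fY z \<partial>PZ)"
      unfolding PZ_def by (subst integral_distr) auto
    finally show ?thesis .
  qed
  define AA where "AA = (\<integral>R. atan_ratio c a \<bar>R\<bar> * atan_ratio c b \<bar>R\<bar> \<partial>cauchy_measure)"
  have step5: "(\<integral>z. fX z * fY z \<partial>PZ) = 4 / pi\<^sup>2 * AA"
  proof (cases "c = 0")
    case True
    then have Ic0: "Ic = {}" using assms(13) fc by simp
    have a0: "a \<noteq> 0" and b0: "b \<noteq> 0" using True assms(2,3) by auto
    have "(\<integral>z. fX z * fY z \<partial>PZ) = (\<integral>\<omega>. fX (Z \<omega>) * fY (Z \<omega>) \<partial>M)"
      unfolding PZ_def by (subst integral_distr) auto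
    also have "\<dots> = 0" using Ic0 a0 b0 by (simp add: Z_def fX_def fY_def)
    also have "AA = 0" unfolding AA_def using True a0 b0 by (simp add: atan_ratio_def)
    ultimately show ?thesis by simp
  next
    case False
    then have cpos: "real c > 0" by simp
    have Ine: "Ic \<noteq> {}" using False assms(13) by auto
    have DZ: "distributed M lborel Z (\<lambda>x. ennreal (cd (real c) x))"
      using sum_cauchy[OF ind dist fc Ine assms(7)] assms(13) by (simp add: Z_def)
    have "PZ = distr M lborel Z" unfolding PZ_def by (rule distr_cong) auto
    also have "\<dots> = density lborel (\<lambda>x. ennreal (cd (real c) x))" by (rule distributed_distr_eq_density[OF DZ])
    finally have PZe: "PZ = density lborel (\<lambda>x. ennreal (cd (real c) x))" .
    have "(\<integral>z. fX z * fY z \<partial>PZ) = (\<integral>R. fX (real c * R) * fY (real c * R) \<partial>cauchy_measure)"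
      unfolding PZe by (rule subst_cd[OF cpos]) measurable
    also have "\<dots> = (\<integral>R. 4 / pi\<^sup>2 * (atan_ratio c a \<bar>R\<bar> * atan_ratio c b \<bar>R\<bar>) \<partial>cauchy_measure)"
    proof (rule integral_cong_AE)
      show "(\<lambda>R. fX (real c * R) * fY (real c * R)) \<in> borel_measurable cauchy_measure"
        unfolding cauchy_measure_def by simp
      show "(\<lambda>R. 4 / pi\<^sup>2 * (atan_ratio c a \<bar>R\<bar> * atan_ratio c b \<bar>R\<bar>)) \<in> borel_measurable cauchy_measure"
        unfolding cauchy_measure_def atan_ratio_def by simp
      show "AE R in cauchy_measure. fX (real c * R) * fY (real c * R)
          = 4 / pi\<^sup>2 * (atan_ratio c a \<bar>R\<bar> * atan_ratio c b \<bar>R\<bar>)"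
        using AE_cauchy_ne0
      proof eventually_elim
        fix R :: real assume R: "R \<noteq> 0"
        have "fX (real c * R) * fY (real c * R)
            = (2/pi * sgn R * atan_ratio c a \<bar>R\<bar>) * (2/pi * sgn R * atan_ratio c b \<bar>R\<bar>)"
          unfolding fX_def fY_def using factor_eq[of c R a] factor_eq[of c R b] False R by simp
        also have "\<dots> = 4 / pi\<^sup>2 * (atan_ratio c a \<bar>R\<bar> * atan_ratio c b \<bar>R\<bar>)"
          using R by (simp add: power2_eq_square sgn_if)
        finally show "fX (real c * R) * fY (real c * R)
            = 4 / pi\<^sup>2 * (atan_ratio c a \<bar>R\<bar> * atan_ratio c b \<bar>R\<bar>)" .
      qed
    qed
    also have "\<dots> = 4 / pi\<^sup>2 * AA" unfolding AA_def by simp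
    finally show ?thesis .
  qed
  have main: "measure M E = 1 / 2 - 2 / pi\<^sup>2 * AA"
    unfolding step1 step4 step5 by simp
  show ?thesis unfolding Let_def LHS main AA_def ..
qed

end
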